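(* Let $G$ be a $(k+1)$-critical hypergraph with $k\ge2$, and let $F\subseteq E(G)$ be a separating edge set of $G$ with $|F|\le k$. Then $|F|=k$ and there is an edge cut $(X,Y,F)$ of $G$ with the following properties: (a) every $k$-coloring $\varphi$ of $G[X]$ satisfies $|\varphi(X_F)|=1$, and every $k$-coloring $\varphi$ of $G[Y]$ satisfies $|\varphi(Y_F)|=k$ and, for every color $i\in\{1,\dots,k\}$, there is an edge $e\in F$ with $\varphi(e\cap Y)=\{i\}$; (b) each vertex of $Y_F$ is incident to exactly one edge of $F$; (c) if $|X_F|\ge2$, then the hypergraph obtained from $G[X]$ by adding the edge $X_F$ is $(k+1)$-critical; (d) the hypergraph obtained from $G[Y]$ by adding a new vertex $v$ and, for each edge $e\in F$, the new edge $(e\setminus X)\cup\{v\}$, is $(k+1)$-critical.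
   Context: A hypergraph is a pair $G=(V,E)$ of finite sets with $E\subseteq 2^V$ and $|e|\ge2$ for all $e\in E$. A $k$-coloring is a map $V\to\{1,\dots,k\}$ such that every edge contains two vertices of different colors; $\chi$ is the chromatic number. $G$ is $(k+1)$-critical if $\chi(G)=k+1$ but $\chi(H)\le k$ for every proper subhypergraph $H$. $G[X]$ has vertex set $X$ and the edges of $G$ contained in $X$. For $X\subseteq V(G)$, $\partial_G(X)$ is the set of edges meeting both $X$ and $V(G)\setminus X$. A separating edge set is a set $F\subseteq E(G)$ such that $G-F$ has more (connected) components than $G$. An edge cut of $G$ is a triple $(X,Y,F)$ with $X$ a non-empty proper subset of $V(G)$, $Y=V(G)\setminus X$, and $F=\partial_G(X)$; then $X_F$ (resp. $Y_F$) denotes the set of vertices of $X$ (resp. $Y$) incident to some edge of $F$. *)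

theory Defs
  imports Main
begin

definition hypergraph :: "'a set \<Rightarrow> 'a set set \<Rightarrow> bool" where
  "hypergraph V E \<longleftrightarrow> finite V \<and> E \<subseteq> Pow V \<and> (\<forall>e\<in>E. card e \<ge> 2)"

definition is_coloring :: "nat \<Rightarrow> 'a set \<Rightarrow> 'a set set \<Rightarrow> ('a \<Rightarrow> nat) \<Rightarrow> bool" where
  "is_coloring k V E f \<longleftrightarrow> (\<forall>v\<in>V. f v \<in> {1..k}) \<and> (\<forall>e\<in>E. \<exists>u\<in>e. \<exists>w\<in>e. f u \<noteq> f w)"

definition colorable :: "nat \<Rightarrow> 'a set \<Rightarrow> 'a set set \<Rightarrow> bool" where
  "colorable k V E \<longleftrightarrow> (\<exists>f. is_coloring k V E f)"

definition chi :: "'a set \<Rightarrow> 'a set set \<Rightarrow> nat" where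
  "chi V E = (LEAST k. colorable k V E)"

definition proper_subhypergraph :: "'a set \<Rightarrow> 'a set set \<Rightarrow> 'a set \<Rightarrow> 'a set set \<Rightarrow> bool" where
  "proper_subhypergraph V' E' V E \<longleftrightarrow>
     hypergraph V' E' \<and> V' \<subseteq> V \<and> E' \<subseteq> E \<and> (V', E') \<noteq> (V, E)"

definition critical :: "nat \<Rightarrow> 'a set \<Rightarrow> 'a set set \<Rightarrow> bool" where
  "critical c V E \<longleftrightarrow> hypergraph V E \<and> chi V E = c \<and>
     (\<forall>V' E'. proper_subhypergraph V' E' V E \<longrightarrow> chi V' E' < c)"

definition induced_edges :: "'a set set \<Rightarrow> 'a set \<Rightarrow> 'a set set" where
  "induced_edges E X = {e \<in> E. e \<subseteq> X}"

definition boundary :: "'a set \<Rightarrow> 'a set set \<Rightarrow> 'a set \<Rightarrow> 'a set set" where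
  "boundary V E X = {e \<in> E. e \<inter> X \<noteq> {} \<and> e \<inter> (V - X) \<noteq> {}}"

definition adj :: "'a set \<Rightarrow> 'a set set \<Rightarrow> ('a \<times> 'a) set" where
  "adj V E = {(u, w). u \<in> V \<and> w \<in> V \<and> (\<exists>e\<in>E. u \<in> e \<and> w \<in> e)}"

definition components :: "'a set \<Rightarrow> 'a set set \<Rightarrow> 'a set set" where
  "components V E = V // ((adj V E)\<^sup>* \<inter> (V \<times> V))"

definition separating_edge_set :: "'a set \<Rightarrow> 'a set set \<Rightarrow> 'a set set \<Rightarrow> bool" where
  "separating_edge_set V E F \<longleftrightarrow> F \<subseteq> E \<and> card (components V (E - F)) > card (components V E)"

end

theory Submission
  imports Defs
begin


lemma coloring_mono_k: "is_coloring j V E f \<Longrightarrow> j \<le> k \<Longrightarrow> is_coloring k V E f"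
  unfolding is_coloring_def by auto

lemma colorable_mono: "colorable j V E \<Longrightarrow> j \<le> k \<Longrightarrow> colorable k V E"
  unfolding colorable_def using coloring_mono_k by blast

lemma coloring_sub: "is_coloring k W D c \<Longrightarrow> V' \<subseteq> W \<Longrightarrow> E' \<subseteq> D \<Longrightarrow> is_coloring k V' E' c"
  unfolding is_coloring_def by blast

lemma two_elems: "2 \<le> card e \<Longrightarrow> \<exists>u\<in>e. \<exists>w\<in>e. u \<noteq> w"
proof (rule ccontr)
  assume a: "2 \<le> card e" and b: "\<not> (\<exists>u\<in>e. \<exists>w\<in>e. u \<noteq> w)"
  have f: "finite e"
  proof (rule ccontr)
    assume "infinite e" then show False using a by simp
  qed
  have "card e \<le> Suc 0" using b card_le_Suc0_iff_eq[OF f] by blast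
  then show False using a by simp
qed

lemma hyp_colorable: assumes "hypergraph V E" shows "\<exists>n. colorable n V E"
proof -
  from assms have fin: "finite V" and EV: "E \<subseteq> Pow V" and c2: "\<forall>e\<in>E. card e \<ge> 2"
    unfolding hypergraph_def by auto
  obtain f and n :: nat where f: "f ` V = {i. i < n}" "inj_on f V" using finite_imp_inj_to_nat_seg[OF fin] by blast
  have "is_coloring n V E (\<lambda>v. f v + 1)"
    unfolding is_coloring_def
  proof (intro conjI ballI)
    fix v assume "v \<in> V" then have "f v < n" using f by auto
    then show "f v + 1 \<in> {1..n}" by auto
  next
    fix e assume e: "e \<in> E"
    then have "card e \<ge> 2" using c2 by auto
    then obtain u w where "u \<in> e" "w \<in> e" "u \<noteq> w" using two_elems by blast
    moreover have "e \<subseteq> V" using e EV by auto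
    ultimately have "u \<in> V" "w \<in> V" "u \<noteq> w" by auto
    then have "f u \<noteq> f w" using f(2) unfolding inj_on_def by blast
    then have "f u + 1 \<noteq> f w + 1" by simp
    then show "\<exists>u\<in>e. \<exists>w\<in>e. f u + 1 \<noteq> f w + 1" using \<open>u\<in>e\<close> \<open>w\<in>e\<close> by blast
  qed
  then show ?thesis unfolding colorable_def by blast
qed

lemma chi_le: "colorable k V E \<Longrightarrow> chi V E \<le> k"
  unfolding chi_def by (rule Least_le)

lemma colorable_chi: "hypergraph V E \<Longrightarrow> colorable (chi V E) V E"
  unfolding chi_def using hyp_colorable by (metis LeastI_ex)

lemma critical_notcol: "critical (k+1) V E \<Longrightarrow> \<not> colorable k V E"
  unfolding critical_def using chi_le by fastforce

lemma critical_subcol: "critical (k+1) V E \<Longrightarrow> proper_subhypergraph V' E' V E \<Longrightarrow> colorable k V' E'"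
proof -
  assume c: "critical (k+1) V E" and p: "proper_subhypergraph V' E' V E"
  then have "chi V' E' < k+1" unfolding critical_def by blast
  moreover have "colorable (chi V' E') V' E'" using p colorable_chi unfolding proper_subhypergraph_def by blast
  ultimately show ?thesis using colorable_mono by fastforce
qed

lemma critI:
  assumes h: "hypergraph W D" and nc: "\<not> colorable k W D" and c1: "colorable (k+1) W D"
    and cov: "\<forall>v\<in>W. \<exists>f\<in>D. v \<in> f" and del: "\<forall>f\<in>D. colorable k W (D - {f})"
  shows "critical (k+1) W D"
  unfolding critical_def
proof (intro conjI allI impI)
  show "hypergraph W D" by fact
  show "chi W D = k+1" unfolding chi_def
  proof (rule Least_equality)
    show "colorable (k+1) W D" by fact
    fix j assume "colorable j W D"
    show "k+1 \<le> j"
    proof (rule ccontr)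
      assume "\<not> k+1 \<le> j" then have "j \<le> k" by simp
      then show False using nc colorable_mono \<open>colorable j W D\<close> by blast
    qed
  qed
  fix V' E' assume p: "proper_subhypergraph V' E' W D"
  then have V': "V' \<subseteq> W" "E' \<subseteq> D" "(V',E') \<noteq> (W,D)" and hp: "hypergraph V' E'"
    unfolding proper_subhypergraph_def by auto
  have "colorable k V' E'"
  proof (cases "E' = D")
    case True
    then have "V' \<noteq> W" using V' by auto
    then obtain v where "v \<in> W" "v \<notin> V'" using V' by auto
    then obtain f where "f \<in> D" "v \<in> f" using cov by auto
    then have False using True hp \<open>v \<notin> V'\<close> unfolding hypergraph_def by auto
    then show ?thesis ..
  next
    case False
    then obtain f where f: "f \<in> D" "f \<notin> E'" using V' by auto
    then obtain c where "is_coloring k W (D - {f}) c" using del unfolding colorable_def by auto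
    then have "is_coloring k V' E' c" using coloring_sub V' f by blast
    then show ?thesis unfolding colorable_def by blast
  qed
  then show "chi V' E' < k+1" using chi_le by fastforce
qed


definition sh :: "nat \<Rightarrow> nat \<Rightarrow> nat \<Rightarrow> nat" where
  "sh k s c = (if c + s \<le> k then c + s else c + s - k)"

lemma sh_range: "c \<in> {1..k} \<Longrightarrow> s < k \<Longrightarrow> sh k s c \<in> {1..k}"
  unfolding sh_def by auto
lemma sh0: "c \<in> {1..k} \<Longrightarrow> sh k 0 c = c"
  unfolding sh_def by auto
lemma sh_inj: "c \<in> {1..k} \<Longrightarrow> d \<in> {1..k} \<Longrightarrow> s < k \<Longrightarrow> sh k s c = sh k s d \<Longrightarrow> c = d"
  unfolding sh_def by (auto split: if_splits)
lemma sh_st: "c \<in> {1..k} \<Longrightarrow> s < k \<Longrightarrow> t < k \<Longrightarrow> sh k s c = sh k t c \<Longrightarrow> s = t"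
  unfolding sh_def by (auto split: if_splits)
lemma sh_inj_on: "s < k \<Longrightarrow> inj_on (sh k s) {1..k}"
  unfolding inj_on_def using sh_inj by blast
lemma sh_image: "s < k \<Longrightarrow> sh k s ` {1..k} \<subseteq> {1..k}"
  using sh_range by blast

definition sw :: "nat \<Rightarrow> nat \<Rightarrow> nat \<Rightarrow> nat" where
  "sw a b c = (if c = a then b else if c = b then a else c)"

lemma sw_inj: "inj_on (sw a b) A"
  unfolding inj_on_def sw_def by auto
lemma sw_image: "a \<in> A \<Longrightarrow> b \<in> A \<Longrightarrow> sw a b ` A \<subseteq> A"
  unfolding sw_def by auto

lemma perm2:
  fixes A :: "nat set"
  assumes "a1 \<in> A" "a2 \<in> A" "b1 \<in> A" "b2 \<in> A" "(b1 = b2) = (a1 = a2)"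
  shows "\<exists>\<sigma>. inj_on \<sigma> A \<and> \<sigma> ` A \<subseteq> A \<and> \<sigma> b1 = a1 \<and> \<sigma> b2 = a2"
proof (cases "b1 = b2")
  case True
  then have "a1 = a2" using assms by simp
  then show ?thesis using True sw_inj[of b1 a1 A] sw_image[of b1 A a1] assms
    by (intro exI[of _ "sw b1 a1"]) (auto simp: sw_def)
next
  case False
  then have ne: "a1 \<noteq> a2" using assms by simp
  define c where "c = sw b1 a1 b2"
  have cA: "c \<in> A" using assms unfolding c_def sw_def by auto
  have ca: "c \<noteq> a1" using False unfolding c_def sw_def by auto
  let ?s = "sw c a2 \<circ> sw b1 a1"
  have "inj_on ?s A"
    using sw_inj sw_image[of b1 A a1] assms by (metis comp_inj_on inj_on_subset)
  moreover have "?s ` A \<subseteq> A" using sw_image[of b1 A a1] sw_image[of c A a2] assms cA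
    by (auto simp: image_comp[symmetric])
  moreover have "?s b1 = a1" using ca ne by (simp add: sw_def)
  moreover have "?s b2 = a2" unfolding comp_def c_def[symmetric] by (simp add: sw_def)
  ultimately show ?thesis by blast
qed

lemma coloring_comp:
  assumes "is_coloring k S D \<psi>" "inj_on \<sigma> {1..k}" "\<sigma> ` {1..k} \<subseteq> {1..k}" "\<forall>e\<in>D. e \<subseteq> S"
  shows "is_coloring k S D (\<sigma> \<circ> \<psi>)"
  unfolding is_coloring_def
proof (intro conjI ballI)
  fix v assume "v \<in> S" then have "\<psi> v \<in> {1..k}" using assms unfolding is_coloring_def by auto
  then show "(\<sigma> \<circ> \<psi>) v \<in> {1..k}" using assms(3) by (simp add: image_subset_iff)
next
  fix e assume e: "e \<in> D"
  then obtain u w where uw: "u \<in> e" "w \<in> e" "\<psi> u \<noteq> \<psi> w" using assms(1) unfolding is_coloring_def by blast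
  then have "u \<in> S" "w \<in> S" using e assms(4) by auto
  then have "\<psi> u \<in> {1..k}" "\<psi> w \<in> {1..k}" using assms(1) unfolding is_coloring_def by auto
  then have "\<sigma> (\<psi> u) \<noteq> \<sigma> (\<psi> w)" using uw(3) assms(2) unfolding inj_on_def by blast
  then show "\<exists>u\<in>e. \<exists>w\<in>e. (\<sigma> \<circ> \<psi>) u \<noteq> (\<sigma> \<circ> \<psi>) w" using uw by auto
qed

lemma boundary_compl: "X \<subseteq> V \<Longrightarrow> boundary V E (V - X) = boundary V E X"
  unfolding boundary_def by (auto simp: double_diff)


definition val :: "('a \<Rightarrow> nat) \<Rightarrow> 'a set \<Rightarrow> 'a set \<Rightarrow> nat" where
  "val \<phi> S e = \<phi> (SOME x. x \<in> e \<inter> S)"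

lemma val_eq: "e \<inter> S \<noteq> {} \<Longrightarrow> \<forall>x\<in>e \<inter> S. \<phi> x = a \<Longrightarrow> val \<phi> S e = a"
  unfolding val_def by (metis (mono_tags, lifting) ex_in_conv someI_ex)

lemma val_in: "e \<inter> S \<noteq> {} \<Longrightarrow> (SOME x. x \<in> e \<inter> S) \<in> e \<inter> S"
  by (metis ex_in_conv someI_ex)

locale cut =
  fixes V :: "'a set" and E F :: "'a set set" and k :: nat and X :: "'a set"
  assumes crit: "critical (k+1) V E" and k2: "k \<ge> 2"
    and Xne: "X \<noteq> {}" and XV: "X \<subset> V" and Fb: "F = boundary V E X" and cardF: "card F \<le> k"
begin

abbreviation "col S \<phi> \<equiv> is_coloring k S (induced_edges E S) \<phi>"

lemma hyp: "hypergraph V E" using crit unfolding critical_def by blast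
lemma finV: "finite V" using hyp unfolding hypergraph_def by blast
lemma EV: "e \<in> E \<Longrightarrow> e \<subseteq> V" using hyp unfolding hypergraph_def by blast
lemma card2: "e \<in> E \<Longrightarrow> 2 \<le> card e" using hyp unfolding hypergraph_def by blast
lemma Yne: "V - X \<noteq> {}" using XV by blast
lemma FE: "F \<subseteq> E" using Fb unfolding boundary_def by blast
lemma finE: "finite E" using hyp finV unfolding hypergraph_def by (meson finite_Pow_iff rev_finite_subset)
lemma finF: "finite F" using FE finE finite_subset by blast
lemma F_X: "e \<in> F \<Longrightarrow> e \<inter> X \<noteq> {}" using Fb unfolding boundary_def by blast
lemma F_Y: "e \<in> F \<Longrightarrow> e \<inter> (V - X) \<noteq> {}" using Fb unfolding boundary_def by blast
lemma notcol: "\<not> colorable k V E" using crit critical_notcol by blast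

lemma indcol: assumes "S \<subseteq> V" "S \<noteq> V" shows "\<exists>\<phi>. col S \<phi>"
proof -
  have "hypergraph S (induced_edges E S)"
    using assms finV card2 unfolding hypergraph_def induced_edges_def by (auto intro: finite_subset)
  then have "proper_subhypergraph S (induced_edges E S) V E"
    using assms unfolding proper_subhypergraph_def induced_edges_def by auto
  then show ?thesis using critical_subcol[OF crit] unfolding colorable_def by blast
qed

lemma colX: "\<exists>\<phi>. col X \<phi>" using indcol XV by blast
lemma colY: "\<exists>\<phi>. col (V - X) \<phi>" using indcol Xne XV by blast

lemma delcol: assumes "e \<in> E" shows "\<exists>c. is_coloring k V (E - {e}) c"
proof -
  have "hypergraph V (E - {e})" using hyp unfolding hypergraph_def by auto
  then have "proper_subhypergraph V (E - {e}) V E"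
    using assms unfolding proper_subhypergraph_def by auto
  then show ?thesis using critical_subcol[OF crit] unfolding colorable_def by blast
qed

lemma cover: assumes "v \<in> V" shows "\<exists>e\<in>E. v \<in> e"
proof (rule ccontr)
  assume a: "\<not> (\<exists>e\<in>E. v \<in> e)"
  have "hypergraph (V - {v}) E" using hyp a unfolding hypergraph_def by (auto intro: finite_subset)
  then have "proper_subhypergraph (V - {v}) E V E"
    using assms unfolding proper_subhypergraph_def by auto
  then obtain c where c: "is_coloring k (V - {v}) E c"
    using critical_subcol[OF crit] unfolding colorable_def by blast
  have "is_coloring k V E (c(v := 1))"
    unfolding is_coloring_def
  proof (intro conjI ballI)
    fix u assume "u \<in> V" then show "(c(v := 1)) u \<in> {1..k}" using c k2 unfolding is_coloring_def by auto
  next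
    fix e assume e: "e \<in> E"
    then obtain u w where "u \<in> e" "w \<in> e" "c u \<noteq> c w" using c unfolding is_coloring_def by blast
    moreover have "u \<noteq> v" "w \<noteq> v" using a e \<open>u\<in>e\<close> \<open>w\<in>e\<close> by auto
    ultimately show "\<exists>u\<in>e. \<exists>w\<in>e. (c(v := 1)) u \<noteq> (c(v := 1)) w" by auto
  qed
  then show False using notcol unfolding colorable_def by blast
qed

definition H :: "('a \<Rightarrow> nat) \<Rightarrow> ('a \<Rightarrow> nat) \<Rightarrow> 'a set set" where
  "H \<phi> \<psi> = {e\<in>F. \<exists>a. (\<forall>x\<in>e \<inter> X. \<phi> x = a) \<and> (\<forall>y\<in>e \<inter> (V - X). \<psi> y = a)}"

lemma K: assumes "col X \<phi>" "col (V - X) \<psi>" shows "H \<phi> \<psi> \<noteq> {}"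
proof -
  define c where "c = (\<lambda>v. if v \<in> X then \<phi> v else \<psi> v)"
  have "\<not> is_coloring k V E c" using notcol unfolding colorable_def by blast
  moreover have "\<forall>v\<in>V. c v \<in> {1..k}"
    using assms unfolding c_def is_coloring_def by auto
  ultimately obtain e where e: "e \<in> E" and m: "\<forall>u\<in>e. \<forall>w\<in>e. c u = c w"
    unfolding is_coloring_def by blast
  have eV: "e \<subseteq> V" using EV e by blast
  have "\<not> e \<subseteq> X"
  proof
    assume "e \<subseteq> X"
    then have "e \<in> induced_edges E X" using e unfolding induced_edges_def by blast
    then obtain u w where uw: "u \<in> e" "w \<in> e" "\<phi> u \<noteq> \<phi> w" using assms(1) unfolding is_coloring_def by blast
    then have "u \<in> X" "w \<in> X" using \<open>e \<subseteq> X\<close> by auto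
    then have "c u \<noteq> c w" using uw(3) unfolding c_def by simp
    then show False using m uw by blast
  qed
  moreover have "\<not> e \<subseteq> V - X"
  proof
    assume "e \<subseteq> V - X"
    then have "e \<in> induced_edges E (V - X)" using e unfolding induced_edges_def by blast
    then obtain u w where uw: "u \<in> e" "w \<in> e" "\<psi> u \<noteq> \<psi> w" using assms(2) unfolding is_coloring_def by blast
    then have "u \<notin> X" "w \<notin> X" using \<open>e \<subseteq> V - X\<close> by auto
    then have "c u \<noteq> c w" using uw(3) unfolding c_def by simp
    then show False using m uw by blast
  qed
  ultimately have "e \<in> F" using eV e unfolding Fb boundary_def by blast
  moreover obtain u0 where "u0 \<in> e" using \<open>\<not> e \<subseteq> X\<close> by blast
  moreover have "\<forall>x\<in>e \<inter> X. \<phi> x = c u0"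
  proof
    fix x assume x: "x \<in> e \<inter> X" then have "c x = c u0" using m \<open>u0\<in>e\<close> by blast
    moreover have "c x = \<phi> x" using x unfolding c_def by simp
    ultimately show "\<phi> x = c u0" by simp
  qed
  moreover have "\<forall>x\<in>e \<inter> (V - X). \<psi> x = c u0"
  proof
    fix x assume x: "x \<in> e \<inter> (V - X)" then have "c x = c u0" using m \<open>u0\<in>e\<close> by blast
    moreover have "c x = \<psi> x" using x unfolding c_def by simp
    ultimately show "\<psi> x = c u0" by simp
  qed
  ultimately have "e \<in> H \<phi> \<psi>" unfolding H_def by blast
  then show ?thesis by blast
qed

lemma colY_sh: "col (V - X) \<psi> \<Longrightarrow> s < k \<Longrightarrow> col (V - X) (sh k s \<circ> \<psi>)"
  by (rule coloring_comp[OF _ sh_inj_on sh_image]) (auto simp: induced_edges_def)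

lemma Hdisj: assumes "col (V - X) \<psi>" "s < k" "t < k" "e \<in> H \<phi> (sh k s \<circ> \<psi>)" "e \<in> H \<phi> (sh k t \<circ> \<psi>)"
  shows "s = t"
proof -
  obtain a where a: "\<forall>x\<in>e \<inter> X. \<phi> x = a" "\<forall>y\<in>e \<inter> (V - X). sh k s (\<psi> y) = a" "e \<in> F"
    using assms(4) unfolding H_def by auto
  obtain b where b: "\<forall>x\<in>e \<inter> X. \<phi> x = b" "\<forall>y\<in>e \<inter> (V - X). sh k t (\<psi> y) = b"
    using assms(5) unfolding H_def by auto
  obtain x where "x \<in> e \<inter> X" using F_X a(3) by blast
  then have ab: "a = b" using a b by auto
  obtain y where y: "y \<in> e \<inter> (V - X)" using F_Y a(3) by blast
  then have "\<psi> y \<in> {1..k}" using assms(1) unfolding is_coloring_def by auto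
  moreover have "sh k s (\<psi> y) = sh k t (\<psi> y)" using a b ab y by auto
  ultimately show ?thesis using sh_st assms by blast
qed

lemma part:
  assumes "col X \<phi>" "col (V - X) \<psi>"
  shows "card F = k \<and> (\<forall>s<k. card (H \<phi> (sh k s \<circ> \<psi>)) = 1) \<and> F = (\<Union>s\<in>{..<k}. H \<phi> (sh k s \<circ> \<psi>))"
proof -
  define Hs where "Hs = (\<lambda>s. H \<phi> (sh k s \<circ> \<psi>))"
  have sub: "Hs s \<subseteq> F" for s unfolding Hs_def H_def by blast
  have fin: "finite (Hs s)" for s using sub finF finite_subset by blast
  have ne: "s < k \<Longrightarrow> Hs s \<noteq> {}" for s unfolding Hs_def using K assms colY_sh by blast
  have c1: "s < k \<Longrightarrow> 1 \<le> card (Hs s)" for s using ne fin by (simp add: Suc_leI card_gt_0_iff)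
  have disj: "\<forall>i\<in>{..<k}. \<forall>j\<in>{..<k}. i \<noteq> j \<longrightarrow> Hs i \<inter> Hs j = {}"
    unfolding Hs_def using Hdisj assms(2) by blast
  have eq: "card (\<Union>(Hs ` {..<k})) = (\<Sum>s<k. card (Hs s))"
    by (rule card_UN_disjoint) (use fin disj in auto)
  have "card (\<Union>(Hs ` {..<k})) \<le> card F" using sub finF by (intro card_mono) auto
  then have le: "(\<Sum>s<k. card (Hs s)) \<le> k" using eq cardF by linarith
  have ge: "(\<Sum>s<k. (1::nat)) \<le> (\<Sum>s<k. card (Hs s))" using c1 by (intro sum_mono) auto
  then have sumk: "(\<Sum>s<k. card (Hs s)) = (\<Sum>s<k. (1::nat))" using le by simp
  have "\<forall>s<k. card (Hs s) = 1"
  proof (intro allI impI)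
    fix s assume "s < k"
    show "card (Hs s) = 1"
      using sum_mono_inv[OF sumk[symmetric], of s] c1 \<open>s<k\<close> by auto
  qed
  moreover have "card F = k" using le ge eq \<open>card (\<Union>(Hs ` {..<k})) \<le> card F\<close> cardF by simp
  moreover have "F = \<Union>(Hs ` {..<k})"
  proof (rule card_subset_eq[symmetric])
    show "finite F" by (rule finF)
    show "\<Union>(Hs ` {..<k}) \<subseteq> F" using sub by blast
    show "card (\<Union>(Hs ` {..<k})) = card F" using eq sumk \<open>card F = k\<close> by simp
  qed
  ultimately show ?thesis unfolding Hs_def by blast
qed

end

context cut begin

lemma inH: assumes "col X \<phi>" "col (V - X) \<psi>" "e \<in> F"
  shows "\<exists>s<k. e \<in> H \<phi> (sh k s \<circ> \<psi>)"
proof -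
  have "F = (\<Union>s\<in>{..<k}. H \<phi> (sh k s \<circ> \<psi>))" using part[OF assms(1,2)] by blast
  then show ?thesis using assms(3) by blast
qed

lemma monoX: assumes "col X \<phi>" "e \<in> F" shows "\<forall>x\<in>e \<inter> X. \<phi> x = val \<phi> X e"
proof -
  obtain \<psi> where p: "col (V - X) \<psi>" using colY by blast
  obtain s where "s < k" "e \<in> H \<phi> (sh k s \<circ> \<psi>)" using inH[OF assms(1) p assms(2)] by blast
  then obtain a where a: "\<forall>x\<in>e \<inter> X. \<phi> x = a" unfolding H_def by blast
  then have "val \<phi> X e = a" by (rule val_eq[OF F_X[OF assms(2)]])
  then show ?thesis using a by simp
qed

lemma monoY: assumes "col (V - X) \<psi>" "e \<in> F" shows "\<forall>y\<in>e \<inter> (V - X). \<psi> y = val \<psi> (V - X) e"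
proof -
  obtain \<phi> where p: "col X \<phi>" using colX by blast
  obtain s where s: "s < k" "e \<in> H \<phi> (sh k s \<circ> \<psi>)" using inH[OF p assms(1) assms(2)] by blast
  then obtain a where a: "\<forall>y\<in>e \<inter> (V - X). (sh k s \<circ> \<psi>) y = a" unfolding H_def by blast
  define y0 where "y0 = (SOME y. y \<in> e \<inter> (V - X))"
  have y0: "y0 \<in> e \<inter> (V - X)" unfolding y0_def by (rule val_in[OF F_Y[OF assms(2)]])
  show ?thesis
  proof
    fix y assume y: "y \<in> e \<inter> (V - X)"
    have r: "\<psi> y \<in> {1..k}" "\<psi> y0 \<in> {1..k}" using y y0 assms(1) unfolding is_coloring_def by auto
    have "sh k s (\<psi> y) = sh k s (\<psi> y0)" using a y y0 by (metis comp_apply)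
    then have "\<psi> y = \<psi> y0" by (rule sh_inj[OF r s(1)])
    then show "\<psi> y = val \<psi> (V - X) e" unfolding val_def y0_def by simp
  qed
qed

lemma val_range: assumes "is_coloring k S D \<phi>" "e \<inter> S \<noteq> {}" shows "val \<phi> S e \<in> {1..k}"
  using val_in[OF assms(2)] assms(1) unfolding val_def is_coloring_def by auto

lemma P: assumes c: "col X \<phi>" "col (V - X) \<psi>" and e: "e1 \<in> F" "e2 \<in> F" "e1 \<noteq> e2"
  shows "(val \<psi> (V - X) e1 = val \<psi> (V - X) e2) = (val \<phi> X e1 \<noteq> val \<phi> X e2)"
proof (rule ccontr)
  let ?a1 = "val \<phi> X e1" and ?a2 = "val \<phi> X e2"
  let ?b1 = "val \<psi> (V - X) e1" and ?b2 = "val \<psi> (V - X) e2"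
  assume "\<not> ?thesis"
  then have eq: "(?b1 = ?b2) = (?a1 = ?a2)" by blast
  have r: "?a1 \<in> {1..k}" "?a2 \<in> {1..k}" "?b1 \<in> {1..k}" "?b2 \<in> {1..k}"
    by (rule val_range[OF c(1) F_X[OF e(1)]], rule val_range[OF c(1) F_X[OF e(2)]],
        rule val_range[OF c(2) F_Y[OF e(1)]], rule val_range[OF c(2) F_Y[OF e(2)]])
  obtain \<sigma> where \<sigma>: "inj_on \<sigma> {1..k}" "\<sigma> ` {1..k} \<subseteq> {1..k}" "\<sigma> ?b1 = ?a1" "\<sigma> ?b2 = ?a2"
    using perm2[OF r(1) r(2) r(3) r(4) eq] by blast
  have c': "col (V - X) (\<sigma> \<circ> \<psi>)"
    by (rule coloring_comp[OF c(2) \<sigma>(1) \<sigma>(2)]) (auto simp: induced_edges_def)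
  have k0: "0 < k" using k2 by simp
  have "e1 \<in> H \<phi> (sh k 0 \<circ> (\<sigma> \<circ> \<psi>))" unfolding H_def
  proof (intro CollectI conjI exI)
    show "e1 \<in> F" by fact
    show "\<forall>x\<in>e1 \<inter> X. \<phi> x = ?a1" using monoX[OF c(1) e(1)] .
    show "\<forall>y\<in>e1 \<inter> (V - X). (sh k 0 \<circ> (\<sigma> \<circ> \<psi>)) y = ?a1"
      using monoY[OF c(2) e(1)] \<sigma>(3) sh0[OF r(1)] by simp
  qed
  moreover have "e2 \<in> H \<phi> (sh k 0 \<circ> (\<sigma> \<circ> \<psi>))" unfolding H_def
  proof (intro CollectI conjI exI)
    show "e2 \<in> F" by fact
    show "\<forall>x\<in>e2 \<inter> X. \<phi> x = ?a2" using monoX[OF c(1) e(2)] .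
    show "\<forall>y\<in>e2 \<inter> (V - X). (sh k 0 \<circ> (\<sigma> \<circ> \<psi>)) y = ?a2"
      using monoY[OF c(2) e(2)] \<sigma>(4) sh0[OF r(2)] by simp
  qed
  moreover have "card (H \<phi> (sh k 0 \<circ> (\<sigma> \<circ> \<psi>))) = 1" using part[OF c(1) c'] k0 by blast
  then obtain z where "H \<phi> (sh k 0 \<circ> (\<sigma> \<circ> \<psi>)) = {z}" by (rule card_1_singletonE)
  ultimately show False using e(3) by blast
qed

abbreviation "alleq \<phi> S \<equiv> (\<forall>e1\<in>F. \<forall>e2\<in>F. val \<phi> S e1 = val \<phi> S e2)"

lemma Q: assumes c: "col X \<phi>" "col (V - X) \<psi>" shows "alleq \<phi> X \<or> alleq \<psi> (V - X)"
proof (cases "\<exists>e1\<in>F. \<exists>e2\<in>F. e1 \<noteq> e2 \<and> val \<psi> (V - X) e1 = val \<psi> (V - X) e2")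
  case True
  then obtain e1 e2 where e: "e1 \<in> F" "e2 \<in> F" "e1 \<noteq> e2" "val \<psi> (V - X) e1 = val \<psi> (V - X) e2" by blast
  have a12: "val \<phi> X e1 \<noteq> val \<phi> X e2" using P[OF c e(1,2,3)] e(4) by simp
  have all: "\<forall>e\<in>F. val \<psi> (V - X) e = val \<psi> (V - X) e1"
  proof
    fix e assume eF: "e \<in> F"
    show "val \<psi> (V - X) e = val \<psi> (V - X) e1"
    proof (rule ccontr)
      assume ne: "val \<psi> (V - X) e \<noteq> val \<psi> (V - X) e1"
      then have ne1: "e \<noteq> e1" by auto
      have ne2: "val \<psi> (V - X) e \<noteq> val \<psi> (V - X) e2" using ne e(4) by simp
      then have ne2': "e \<noteq> e2" by auto
      have p1: "(val \<psi> (V - X) e = val \<psi> (V - X) e1) = (val \<phi> X e \<noteq> val \<phi> X e1)"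
        by (rule P[OF c eF e(1) ne1])
      have p2: "(val \<psi> (V - X) e = val \<psi> (V - X) e2) = (val \<phi> X e \<noteq> val \<phi> X e2)"
        by (rule P[OF c eF e(2) ne2'])
      have "val \<phi> X e = val \<phi> X e1" using p1 ne by blast
      moreover have "val \<phi> X e = val \<phi> X e2" using p2 ne2 by blast
      ultimately show False using a12 by simp
    qed
  qed
  have "alleq \<psi> (V - X)"
  proof (intro ballI)
    fix x y assume "x \<in> F" "y \<in> F"
    then show "val \<psi> (V - X) x = val \<psi> (V - X) y" using all by metis
  qed
  then show ?thesis by blast
next
  case False
  have "alleq \<phi> X"
  proof (intro ballI)
    fix x y assume xy: "x \<in> F" "y \<in> F"
    show "val \<phi> X x = val \<phi> X y"
    proof (cases "x = y")
      case True then show ?thesis by simp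
    next
      case ne: False
      then have "val \<psi> (V - X) x \<noteq> val \<psi> (V - X) y" using False xy by blast
      then show ?thesis using P[OF c xy ne] by blast
    qed
  qed
  then show ?thesis by blast
qed

lemma two_edges: "\<exists>e1\<in>F. \<exists>e2\<in>F. e1 \<noteq> e2"
proof -
  obtain \<phi> \<psi> where "col X \<phi>" "col (V - X) \<psi>" using colX colY by blast
  then have "card F = k" using part by blast
  then have "2 \<le> card F" using k2 by simp
  then show ?thesis by (rule two_elems)
qed

lemma injY: assumes c: "col X \<phi>" "col (V - X) \<psi>" and a: "alleq \<phi> X" shows "inj_on (val \<psi> (V - X)) F"
  unfolding inj_on_def
proof (intro ballI impI)
  fix x y assume xy: "x \<in> F" "y \<in> F" and eq: "val \<psi> (V - X) x = val \<psi> (V - X) y"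
  show "x = y"
  proof (rule ccontr)
    assume "x \<noteq> y"
    then have "val \<phi> X x \<noteq> val \<phi> X y" using P[OF c xy] eq by blast
    then show False using a xy by blast
  qed
qed

lemma not_alleq_inj: "inj_on f F \<Longrightarrow> \<not> (\<forall>e1\<in>F. \<forall>e2\<in>F. f e1 = f e2)"
  using two_edges unfolding inj_on_def by blast

definition good where
  "good \<longleftrightarrow> (\<forall>\<phi>. col X \<phi> \<longrightarrow> alleq \<phi> X) \<and> (\<forall>\<psi>. col (V - X) \<psi> \<longrightarrow> inj_on (val \<psi> (V - X)) F)"

lemma orient: assumes "col X \<phi>0" "alleq \<phi>0 X" shows good
proof -
  obtain \<psi>0 where p0: "col (V - X) \<psi>0" using colY by blast
  have i0: "inj_on (val \<psi>0 (V - X)) F" using injY[OF assms(1) p0 assms(2)] .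
  have "\<forall>\<phi>. col X \<phi> \<longrightarrow> alleq \<phi> X"
    using Q[OF _ p0] not_alleq_inj[OF i0] by blast
  moreover have "\<forall>\<psi>. col (V - X) \<psi> \<longrightarrow> inj_on (val \<psi> (V - X)) F"
    using injY[OF assms(1) _ assms(2)] by blast
  ultimately show ?thesis unfolding good_def by blast
qed

lemma startcase: "(\<exists>\<phi>. col X \<phi> \<and> alleq \<phi> X) \<or> (\<exists>\<psi>. col (V - X) \<psi> \<and> alleq \<psi> (V - X))"
  using Q colX colY by blast

lemma cardFk: "card F = k"
  using part colX colY by blast

end

context cut begin
context assumes gd: good begin

lemma gX: "col X \<phi> \<Longrightarrow> alleq \<phi> X" using gd unfolding good_def by blast
lemma gY: "col (V - X) \<psi> \<Longrightarrow> inj_on (val \<psi> (V - X)) F" using gd unfolding good_def by blast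

lemma colorsY: assumes "col (V - X) \<psi>" shows "val \<psi> (V - X) ` F = {1..k}"
proof (rule card_subset_eq)
  show "finite {1..k}" by simp
  show "val \<psi> (V - X) ` F \<subseteq> {1..k}" using val_range[OF assms] F_Y by blast
  show "card (val \<psi> (V - X) ` F) = card {1..k}" using card_image[OF gY[OF assms]] cardFk by simp
qed

lemma imgY: assumes "col (V - X) \<psi>" shows "\<psi> ` ((V - X) \<inter> \<Union>F) = val \<psi> (V - X) ` F"
proof
  show "\<psi> ` ((V - X) \<inter> \<Union>F) \<subseteq> val \<psi> (V - X) ` F"
  proof
    fix z assume "z \<in> \<psi> ` ((V - X) \<inter> \<Union>F)"
    then obtain y e where "y \<in> V - X" "e \<in> F" "y \<in> e" "z = \<psi> y" by blast
    then show "z \<in> val \<psi> (V - X) ` F" using monoY[OF assms] by blast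
  qed
next
  show "val \<psi> (V - X) ` F \<subseteq> \<psi> ` ((V - X) \<inter> \<Union>F)"
  proof
    fix z assume "z \<in> val \<psi> (V - X) ` F"
    then obtain e where e: "e \<in> F" "z = val \<psi> (V - X) e" by blast
    have "(SOME x. x \<in> e \<inter> (V - X)) \<in> e \<inter> (V - X)" by (rule val_in[OF F_Y[OF e(1)]])
    then show "z \<in> \<psi> ` ((V - X) \<inter> \<Union>F)" using e unfolding val_def by blast
  qed
qed

lemma partA1: assumes "col X \<phi>" shows "card (\<phi> ` (X \<inter> \<Union>F)) = 1"
proof -
  obtain e0 where e0: "e0 \<in> F" using two_edges by blast
  have "\<phi> ` (X \<inter> \<Union>F) = {val \<phi> X e0}"
  proof
    show "\<phi> ` (X \<inter> \<Union>F) \<subseteq> {val \<phi> X e0}"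
    proof
      fix z assume "z \<in> \<phi> ` (X \<inter> \<Union>F)"
      then obtain x e where x: "x \<in> X" "e \<in> F" "x \<in> e" "z = \<phi> x" by blast
      then have "\<phi> x = val \<phi> X e" using monoX[OF assms] by blast
      also have "\<dots> = val \<phi> X e0" using gX[OF assms] x(2) e0 by blast
      finally show "z \<in> {val \<phi> X e0}" using x by simp
    qed
    have "(SOME x. x \<in> e0 \<inter> X) \<in> e0 \<inter> X" by (rule val_in[OF F_X[OF e0]])
    then show "{val \<phi> X e0} \<subseteq> \<phi> ` (X \<inter> \<Union>F)" using e0 unfolding val_def by blast
  qed
  then show ?thesis by simp
qed

lemma partA2: assumes "col (V - X) \<psi>"
  shows "card (\<psi> ` ((V - X) \<inter> \<Union>F)) = k \<and> (\<forall>i\<in>{1..k}. \<exists>e\<in>F. \<psi> ` (e \<inter> (V - X)) = {i})"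
proof
  show "card (\<psi> ` ((V - X) \<inter> \<Union>F)) = k" using imgY[OF assms] colorsY[OF assms] by simp
  show "\<forall>i\<in>{1..k}. \<exists>e\<in>F. \<psi> ` (e \<inter> (V - X)) = {i}"
  proof
    fix i assume "i \<in> {1..k}"
    then obtain e where e: "e \<in> F" "val \<psi> (V - X) e = i" using colorsY[OF assms] by (metis imageE)
    have "\<psi> ` (e \<inter> (V - X)) = {i}"
      using monoY[OF assms e(1)] F_Y[OF e(1)] e(2) by auto
    then show "\<exists>e\<in>F. \<psi> ` (e \<inter> (V - X)) = {i}" using e(1) by blast
  qed
qed

lemma colorsY': assumes "col (V - X) \<psi>" "i \<in> {1..k}" shows "\<exists>e\<in>F. \<forall>y\<in>e \<inter> (V - X). \<psi> y = i"
proof -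
  obtain e where "e \<in> F" "\<psi> ` (e \<inter> (V - X)) = {i}" using partA2[OF assms(1)] assms(2) by blast
  then show ?thesis by blast
qed

lemma partB: assumes "y \<in> (V - X) \<inter> \<Union>F" shows "card {e\<in>F. y \<in> e} = 1"
proof -
  obtain \<psi> where p: "col (V - X) \<psi>" using colY by blast
  obtain e0 where e0: "e0 \<in> F" "y \<in> e0" using assms by blast
  have "{e\<in>F. y \<in> e} = {e0}"
  proof
    show "{e0} \<subseteq> {e\<in>F. y \<in> e}" using e0 by blast
    show "{e\<in>F. y \<in> e} \<subseteq> {e0}"
    proof
      fix e assume e: "e \<in> {e\<in>F. y \<in> e}"
      have eF: "e \<in> F" "y \<in> e \<inter> (V - X)" using e assms by auto
      have "val \<psi> (V - X) e = \<psi> y" using monoY[OF p eF(1)] eF(2) by simp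
      moreover have "y \<in> e0 \<inter> (V - X)" using e0 assms by auto
      then have "val \<psi> (V - X) e0 = \<psi> y" using monoY[OF p e0(1)] by simp
      ultimately have "e = e0" using gY[OF p] e e0 unfolding inj_on_def by auto
      then show "e \<in> {e0}" by simp
    qed
  qed
  then show ?thesis by simp
qed

end
end

context cut begin
context assumes gd: good begin

lemma partC: assumes c2: "card (X \<inter> \<Union>F) \<ge> 2"
  shows "critical (k + 1) X (insert (X \<inter> \<Union>F) (induced_edges E X))"
proof -
  define XF where "XF = X \<inter> \<Union>F"
  define D where "D = insert XF (induced_edges E X)"
  have XsV: "X \<subseteq> V" using XV by blast
  have hD: "hypergraph X D"
    unfolding hypergraph_def
  proof (intro conjI)
    show "finite X" using finV XsV finite_subset by blast
    show "D \<subseteq> Pow X" unfolding D_def XF_def induced_edges_def by blast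
    show "\<forall>e\<in>D. 2 \<le> card e" unfolding D_def using card2 c2 unfolding XF_def induced_edges_def by auto
  qed
  obtain \<phi>0 where p0: "col X \<phi>0" using colX by blast
  have nc: "\<not> colorable k X D"
  proof
    assume "colorable k X D"
    then obtain c where c: "is_coloring k X D c" unfolding colorable_def by blast
    then have "col X c" by (rule coloring_sub) (auto simp: D_def)
    then have "card (c ` XF) = 1" using gd partA1 unfolding XF_def by blast
    then obtain z where z: "c ` XF = {z}" by (rule card_1_singletonE)
    have "XF \<in> D" unfolding D_def by simp
    then obtain u w where uw: "u \<in> XF" "w \<in> XF" "c u \<noteq> c w" using c unfolding is_coloring_def by blast
    have "c u \<in> {z}" using imageI[OF uw(1), of c] z by simp
    moreover have "c w \<in> {z}" using imageI[OF uw(2), of c] z by simp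
    ultimately show False using uw(3) by simp
  qed
  obtain x0 where x0: "x0 \<in> XF" using two_elems[OF c2] unfolding XF_def by blast
  have x0X: "x0 \<in> X" using x0 unfolding XF_def by blast
  have c1: "colorable (k+1) X D"
  proof -
    define c where "c = \<phi>0(x0 := k+1)"
    have "is_coloring (k+1) X D c"
      unfolding is_coloring_def
    proof (intro conjI ballI)
      fix v assume "v \<in> X"
      then show "c v \<in> {1..k+1}" using p0 unfolding c_def is_coloring_def by auto
    next
      fix g assume g: "g \<in> D"
      show "\<exists>u\<in>g. \<exists>w\<in>g. c u \<noteq> c w"
      proof (cases "x0 \<in> g")
        case True
        have "2 \<le> card g" using hD g unfolding hypergraph_def by blast
        then obtain u w where uw: "u \<in> g" "w \<in> g" "u \<noteq> w" using two_elems by blast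
        then obtain z where z: "z \<in> g" "z \<noteq> x0" by blast
        have "g \<subseteq> X" using hD g unfolding hypergraph_def by blast
        then have "\<phi>0 z \<in> {1..k}" using z p0 unfolding is_coloring_def by auto
        then have "c z \<noteq> c x0" using z unfolding c_def by auto
        then show ?thesis using z True by blast
      next
        case False
        then have "g \<noteq> XF" using x0 by blast
        then have "g \<in> induced_edges E X" using g unfolding D_def by blast
        then obtain u w where uw: "u \<in> g" "w \<in> g" "\<phi>0 u \<noteq> \<phi>0 w" using p0 unfolding is_coloring_def by blast
        then have "c u \<noteq> c w" using False unfolding c_def by auto
        then show ?thesis using uw by blast
      qed
    qed
    then show ?thesis unfolding colorable_def by blast
  qed
  have cov: "\<forall>v\<in>X. \<exists>f\<in>D. v \<in> f"
  proof
    fix v assume v: "v \<in> X"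
    then obtain e where e: "e \<in> E" "v \<in> e" using cover XsV by blast
    show "\<exists>f\<in>D. v \<in> f"
    proof (cases "e \<subseteq> X")
      case True
      then have "e \<in> D" using e unfolding D_def induced_edges_def by blast
      then show ?thesis using e by blast
    next
      case False
      then have "e \<in> F" using e v EV[OF e(1)] unfolding Fb boundary_def by blast
      then have "v \<in> XF" using v e unfolding XF_def by blast
      then show ?thesis unfolding D_def by blast
    qed
  qed
  have del: "\<forall>f\<in>D. colorable k X (D - {f})"
  proof
    fix f assume f: "f \<in> D"
    show "colorable k X (D - {f})"
    proof (cases "f = XF")
      case True
      have "is_coloring k X (D - {f}) \<phi>0" by (rule coloring_sub[OF p0]) (auto simp: D_def True)
      then show ?thesis unfolding colorable_def by blast
    next
      case False
      then have fi: "f \<in> induced_edges E X" using f unfolding D_def by blast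
      then have fE: "f \<in> E" and fX: "f \<subseteq> X" unfolding induced_edges_def by auto
      obtain c where c: "is_coloring k V (E - {f}) c" using delcol[OF fE] by blast
      have fne: "f \<noteq> {}" using card2[OF fE] by (metis card.empty not_numeral_le_zero)
      have cY: "col (V - X) c"
      proof (rule coloring_sub[OF c])
        show "V - X \<subseteq> V" by blast
        show "induced_edges E (V - X) \<subseteq> E - {f}"
          using fX fne unfolding induced_edges_def by blast
      qed
      have "is_coloring k X (D - {f}) c"
        unfolding is_coloring_def
      proof (intro conjI ballI)
        fix v assume "v \<in> X" then show "c v \<in> {1..k}" using c XsV unfolding is_coloring_def by auto
      next
        fix g assume g: "g \<in> D - {f}"
        show "\<exists>u\<in>g. \<exists>w\<in>g. c u \<noteq> c w"
        proof (cases "g = XF")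
          case False
          then have "g \<in> E - {f}" using g unfolding D_def induced_edges_def by blast
          then show ?thesis using c unfolding is_coloring_def by blast
        next
          case True
          show ?thesis
          proof (rule ccontr)
            assume "\<not> ?thesis"
            then have const: "\<forall>u\<in>XF. \<forall>w\<in>XF. c u = c w" using True by blast
            have "c x0 \<in> {1..k}" using c x0X XsV unfolding is_coloring_def by auto
            then obtain e where e: "e \<in> F" "\<forall>y\<in>e \<inter> (V - X). c y = c x0"
              using colorsY'[OF gd cY] by blast
            have "e \<noteq> f" using F_Y[OF e(1)] fX by blast
            then have "e \<in> E - {f}" using e FE by blast
            then obtain u w where uw: "u \<in> e" "w \<in> e" "c u \<noteq> c w" using c unfolding is_coloring_def by blast
            have all: "\<forall>z\<in>e. c z = c x0"
            proof
              fix z assume z: "z \<in> e"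
              show "c z = c x0"
              proof (cases "z \<in> X")
                case True
                then have "z \<in> XF" using z e(1) unfolding XF_def by blast
                then show ?thesis using const x0 by blast
              next
                case False
                then have "z \<in> e \<inter> (V - X)" using z EV e(1) FE by blast
                then show ?thesis using e(2) by blast
              qed
            qed
            then show False using uw by simp
          qed
        qed
      qed
      then show ?thesis unfolding colorable_def by blast
    qed
  qed
  have "critical (k+1) X D" by (rule critI[OF hD nc c1 cov del])
  then show ?thesis unfolding D_def XF_def .
qed

end
end

context cut begin
context assumes gd: good begin

lemma partD:
  "critical (k + 1) (insert None (Some ` (V - X)))
     ((\<lambda>e. Some ` e) ` induced_edges E (V - X) \<union> (\<lambda>e. insert None (Some ` (e - X))) ` F)"
proof -
  define W where "W = insert None (Some ` (V - X))"
  define new where "new = (\<lambda>e. insert None (Some ` (e - X)))"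
  define D where "D = (\<lambda>e. Some ` e) ` induced_edges E (V - X) \<union> new ` F"
  have eX: "e \<in> F \<Longrightarrow> e - X = e \<inter> (V - X)" for e using EV FE by blast
  have hD: "hypergraph W D"
    unfolding hypergraph_def
  proof (intro conjI ballI)
    show "finite W" unfolding W_def using finV by simp
    show "D \<subseteq> Pow W" unfolding D_def W_def new_def induced_edges_def using EV FE by blast
  next
    fix g assume "g \<in> D"
    then consider (a) e where "e \<in> induced_edges E (V - X)" "g = Some ` e" | (b) e where "e \<in> F" "g = new e"
      unfolding D_def by blast
    then show "2 \<le> card g"
    proof cases
      case a
      then have "2 \<le> card e" using card2 unfolding induced_edges_def by blast
      then show ?thesis using a(2) card_image[of Some e] by simp
    next
      case b
      have fin: "finite (e - X)" using EV FE b(1) finV finite_subset by blast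
      have "e - X \<noteq> {}" using F_Y[OF b(1)] eX[OF b(1)] by simp
      then have "card (e - X) \<ge> 1" using fin by (simp add: Suc_leI card_gt_0_iff)
      moreover have "card g = Suc (card (Some ` (e - X)))" unfolding b(2) new_def
        using fin by (simp add: card_insert_if)
      moreover have "card (Some ` (e - X)) = card (e - X)" by (simp add: card_image)
      ultimately show ?thesis by simp
    qed
  qed
  have nc: "\<not> colorable k W D"
  proof
    assume "colorable k W D"
    then obtain c where c: "is_coloring k W D c" unfolding colorable_def by blast
    define \<psi> where "\<psi> = c \<circ> Some"
    have p: "col (V - X) \<psi>"
      unfolding is_coloring_def
    proof (intro conjI ballI)
      fix v assume "v \<in> V - X" then show "\<psi> v \<in> {1..k}" using c unfolding \<psi>_def W_def is_coloring_def by auto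
    next
      fix e assume e: "e \<in> induced_edges E (V - X)"
      then have "Some ` e \<in> D" unfolding D_def by blast
      then obtain u w where "u \<in> Some ` e" "w \<in> Some ` e" "c u \<noteq> c w" using c unfolding is_coloring_def by blast
      then show "\<exists>u\<in>e. \<exists>w\<in>e. \<psi> u \<noteq> \<psi> w" unfolding \<psi>_def by auto
    qed
    have "c None \<in> {1..k}" using c unfolding W_def is_coloring_def by auto
    then obtain e where e: "e \<in> F" "\<forall>y\<in>e \<inter> (V - X). \<psi> y = c None" using colorsY'[OF gd p] by blast
    have "new e \<in> D" unfolding D_def using e(1) by blast
    then obtain u w where uw: "u \<in> new e" "w \<in> new e" "c u \<noteq> c w" using c unfolding is_coloring_def by blast
    have "\<forall>z\<in>new e. c z = c None"
    proof
      fix z assume "z \<in> new e"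
      then have "z = None \<or> (\<exists>y\<in>e \<inter> (V - X). z = Some y)" unfolding new_def using eX[OF e(1)] by auto
      then show "c z = c None" using e(2) unfolding \<psi>_def by auto
    qed
    then show False using uw by simp
  qed
  obtain \<psi>0 where p0: "col (V - X) \<psi>0" using colY by blast
  have c1: "colorable (k+1) W D"
  proof -
    define c where "c = (\<lambda>oo. case oo of None \<Rightarrow> k+1 | Some y \<Rightarrow> \<psi>0 y)"
    have "is_coloring (k+1) W D c"
      unfolding is_coloring_def
    proof (intro conjI ballI)
      fix v assume "v \<in> W" then consider "v = None" | y where "y \<in> V - X" "v = Some y" unfolding W_def by blast
      then show "c v \<in> {1..k+1}"
      proof cases
        case 1 then show ?thesis unfolding c_def by simp
      next
        case 2 then have "\<psi>0 y \<in> {1..k}" using p0 unfolding is_coloring_def by blast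
        then show ?thesis using 2 unfolding c_def by simp
      qed
    next
      fix g assume "g \<in> D"
      then consider (a) e where "e \<in> induced_edges E (V - X)" "g = Some ` e" | (b) e where "e \<in> F" "g = new e"
        unfolding D_def by blast
      then show "\<exists>u\<in>g. \<exists>w\<in>g. c u \<noteq> c w"
      proof cases
        case a
        then obtain u w where uw: "u \<in> e" "w \<in> e" "\<psi>0 u \<noteq> \<psi>0 w" using p0 unfolding is_coloring_def by blast
        have "Some u \<in> g" "Some w \<in> g" using uw a(2) by auto
        moreover have "c (Some u) \<noteq> c (Some w)" using uw(3) unfolding c_def by simp
        ultimately show ?thesis by blast
      next
        case b
        obtain y where y: "y \<in> e \<inter> (V - X)" using F_Y[OF b(1)] by blast
        then have "\<psi>0 y \<in> {1..k}" using p0 unfolding is_coloring_def by auto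
        then have "c None \<noteq> c (Some y)" unfolding c_def by auto
        moreover have "None \<in> g" "Some y \<in> g" using b y unfolding new_def by auto
        ultimately show ?thesis by blast
      qed
    qed
    then show ?thesis unfolding colorable_def by blast
  qed
  obtain e0 where e0: "e0 \<in> F" using two_edges by blast
  have cov: "\<forall>v\<in>W. \<exists>f\<in>D. v \<in> f"
  proof
    fix v assume "v \<in> W"
    then consider (n) "v = None" | (s) y where "y \<in> V - X" "v = Some y" unfolding W_def by blast
    then show "\<exists>f\<in>D. v \<in> f"
    proof cases
      case n
      then have "v \<in> new e0" unfolding new_def by simp
      then show ?thesis using e0 unfolding D_def by blast
    next
      case s
      then obtain e where e: "e \<in> E" "y \<in> e" using cover by blast
      show ?thesis
      proof (cases "e \<subseteq> V - X")
        case True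
        then have "Some ` e \<in> D" using e unfolding D_def induced_edges_def by blast
        then show ?thesis using e s by blast
      next
        case False
        then have "e \<in> F" using e s EV[OF e(1)] unfolding Fb boundary_def by blast
        moreover have "v \<in> new e" using s e unfolding new_def by blast
        ultimately show ?thesis unfolding D_def by blast
      qed
    qed
  qed
  have lift: "colorable k W (D - {g})"
    if fE: "f \<in> E" and fX: "f \<notin> induced_edges E X" and c: "is_coloring k V (E - {f}) c"
      and gs: "\<forall>g'\<in>D - {g}. (\<exists>e\<in>induced_edges E (V - X). e \<noteq> f \<and> g' = Some ` e) \<or> (\<exists>e\<in>F. e \<noteq> f \<and> g' = new e)"
    for f g c
  proof -
    have cX: "col X c"
    proof (rule coloring_sub[OF c])
      show "X \<subseteq> V" using XV by blast
      show "induced_edges E X \<subseteq> E - {f}" using fX unfolding induced_edges_def by blast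
    qed
    define a where "a = val c X e0"
    have a: "a \<in> {1..k}" unfolding a_def by (rule val_range[OF cX F_X[OF e0]])
    have aX: "\<forall>x\<in>e \<inter> X. c x = a" if "e \<in> F" for e
    proof
      fix x assume "x \<in> e \<inter> X"
      then have "c x = val c X e" using monoX[OF cX that] by blast
      also have "\<dots> = a" unfolding a_def using gX[OF gd cX] that e0 by blast
      finally show "c x = a" .
    qed
    define c' where "c' = (\<lambda>oo. case oo of None \<Rightarrow> a | Some y \<Rightarrow> c y)"
    have "is_coloring k W (D - {g}) c'"
      unfolding is_coloring_def
    proof (intro conjI ballI)
      fix v assume "v \<in> W"
      then consider "v = None" | y where "y \<in> V - X" "v = Some y" unfolding W_def by blast
      then show "c' v \<in> {1..k}"
      proof cases
        case 1 then show ?thesis using a unfolding c'_def by simp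
      next
        case 2 then have "c y \<in> {1..k}" using c unfolding is_coloring_def by blast
        then show ?thesis using 2 unfolding c'_def by simp
      qed
    next
      fix g' assume g': "g' \<in> D - {g}"
      have "(\<exists>e\<in>induced_edges E (V - X). e \<noteq> f \<and> g' = Some ` e) \<or> (\<exists>e\<in>F. e \<noteq> f \<and> g' = new e)"
        using gs g' by (rule bspec)
      then consider (a) e where "e \<in> induced_edges E (V - X)" "e \<noteq> f" "g' = Some ` e"
        | (b) e where "e \<in> F" "e \<noteq> f" "g' = new e" by blast
      then show "\<exists>u\<in>g'. \<exists>w\<in>g'. c' u \<noteq> c' w"
      proof cases
        case a
        then have "e \<in> E - {f}" unfolding induced_edges_def by blast
        then obtain u w where uw: "u \<in> e" "w \<in> e" "c u \<noteq> c w" using c unfolding is_coloring_def by blast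
        have "Some u \<in> g'" "Some w \<in> g'" using uw a(3) by auto
        moreover have "c' (Some u) \<noteq> c' (Some w)" using uw(3) unfolding c'_def by simp
        ultimately show ?thesis by blast
      next
        case b
        then have "e \<in> E - {f}" using FE by blast
        then obtain u w where uw: "u \<in> e" "w \<in> e" "c u \<noteq> c w" using c unfolding is_coloring_def by blast
        have "\<exists>y\<in>e - X. c y \<noteq> a"
        proof (rule ccontr)
          assume "\<not> ?thesis"
          then have "\<forall>z\<in>e. c z = a" using aX[OF b(1)] by blast
          then show False using uw by simp
        qed
        then obtain y where y: "y \<in> e - X" "c y \<noteq> a" by blast
        have "None \<in> g'" "Some y \<in> g'" using b y unfolding new_def by auto
        moreover have "c' None \<noteq> c' (Some y)" using y unfolding c'_def by simp
        ultimately show ?thesis by blast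
      qed
    qed
    then show ?thesis unfolding colorable_def by blast
  qed
  have del: "\<forall>g\<in>D. colorable k W (D - {g})"
  proof
    fix g assume "g \<in> D"
    then consider (a) e0' where "e0' \<in> induced_edges E (V - X)" "g = Some ` e0'" | (b) e0' where "e0' \<in> F" "g = new e0'"
      unfolding D_def by blast
    then show "colorable k W (D - {g})"
    proof cases
      case a
      then have fE: "e0' \<in> E" and fY: "e0' \<subseteq> V - X" unfolding induced_edges_def by auto
      have fne: "e0' \<noteq> {}" using card2[OF fE] by (metis card.empty not_numeral_le_zero)
      have fX: "e0' \<notin> induced_edges E X" using fY fne unfolding induced_edges_def by blast
      obtain c where c: "is_coloring k V (E - {e0'}) c" using delcol[OF fE] by blast
      have notF: "e0' \<notin> F" using fY F_X by blast
      show ?thesis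
      proof (rule lift[OF fE fX c], intro ballI)
        fix g' assume "g' \<in> D - {g}"
        then have g'D: "g' \<in> D" "g' \<noteq> g" by auto
        then consider (x) e where "e \<in> induced_edges E (V - X)" "g' = Some ` e" | (y) e where "e \<in> F" "g' = new e"
          unfolding D_def by blast
        then show "(\<exists>e\<in>induced_edges E (V - X). e \<noteq> e0' \<and> g' = Some ` e) \<or> (\<exists>e\<in>F. e \<noteq> e0' \<and> g' = new e)"
        proof cases
          case x
          then have "e \<noteq> e0'" using g'D(2) a(2) by blast
          then show ?thesis using x by blast
        next
          case y
          then have "e \<noteq> e0'" using notF by blast
          then show ?thesis using y by blast
        qed
      qed
    next
      case b
      then have fE: "e0' \<in> E" using FE by blast
      have fX: "e0' \<notin> induced_edges E X" using F_Y[OF b(1)] unfolding induced_edges_def by blast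
      have notY: "e0' \<notin> induced_edges E (V - X)" using F_X[OF b(1)] unfolding induced_edges_def by blast
      obtain c where c: "is_coloring k V (E - {e0'}) c" using delcol[OF fE] by blast
      show ?thesis
      proof (rule lift[OF fE fX c], intro ballI)
        fix g' assume "g' \<in> D - {g}"
        then have g'D: "g' \<in> D" "g' \<noteq> g" by auto
        then consider (x) e where "e \<in> induced_edges E (V - X)" "g' = Some ` e" | (y) e where "e \<in> F" "g' = new e"
          unfolding D_def by blast
        then show "(\<exists>e\<in>induced_edges E (V - X). e \<noteq> e0' \<and> g' = Some ` e) \<or> (\<exists>e\<in>F. e \<noteq> e0' \<and> g' = new e)"
        proof cases
          case x
          then have "e \<noteq> e0'" using notY by blast
          then show ?thesis using x by blast
        next
          case y
          then have "e \<noteq> e0'" using g'D(2) b(2) by blast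
          then show ?thesis using y by blast
        qed
      qed
    qed
  qed
  have "critical (k+1) W D" by (rule critI[OF hD nc c1 cov del])
  then show ?thesis unfolding W_def D_def new_def .
qed

end
end

context cut begin

lemma main: assumes gd: good
  shows "X \<noteq> {} \<and> X \<subset> V \<and> F = boundary V E X \<and>
       (let Y = V - X; XF = X \<inter> \<Union>F; YF = Y \<inter> \<Union>F in
         (\<forall>\<phi>. is_coloring k X (induced_edges E X) \<phi> \<longrightarrow> card (\<phi> ` XF) = 1) \<and>
         (\<forall>\<phi>. is_coloring k Y (induced_edges E Y) \<phi> \<longrightarrow>
              card (\<phi> ` YF) = k \<and> (\<forall>i\<in>{1..k}. \<exists>e\<in>F. \<phi> ` (e \<inter> Y) = {i})) \<and>
         (\<forall>y\<in>YF. card {e\<in>F. y \<in> e} = 1) \<and>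
         (card XF \<ge> 2 \<longrightarrow> critical (k + 1) X (insert XF (induced_edges E X))) \<and>
         critical (k + 1) (insert None (Some ` Y))
           ((\<lambda>e. Some ` e) ` induced_edges E Y \<union>
            (\<lambda>e. insert None (Some ` (e - X))) ` F))"
  unfolding Let_def
proof (intro conjI allI impI ballI)
  show "X \<noteq> {}" by (rule Xne)
  show "X \<subset> V" by (rule XV)
  show "F = boundary V E X" by (rule Fb)
  fix \<phi> assume "is_coloring k X (induced_edges E X) \<phi>"
  then show "card (\<phi> ` (X \<inter> \<Union>F)) = 1" by (rule partA1[OF gd])
next
  fix \<phi> assume "is_coloring k (V - X) (induced_edges E (V - X)) \<phi>"
  then show "card (\<phi> ` ((V - X) \<inter> \<Union>F)) = k" using partA2[OF gd] by blast
next
  fix \<phi> i assume "is_coloring k (V - X) (induced_edges E (V - X)) \<phi>" "i \<in> {1..k}"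
  then show "\<exists>e\<in>F. \<phi> ` (e \<inter> (V - X)) = {i}" using partA2[OF gd] by blast
next
  fix y assume "y \<in> (V - X) \<inter> \<Union>F"
  then show "card {e\<in>F. y \<in> e} = 1" by (rule partB[OF gd])
next
  assume "2 \<le> card (X \<inter> \<Union>F)"
  then show "critical (k + 1) X (insert (X \<inter> \<Union>F) (induced_edges E X))" by (rule partC[OF gd])
next
  show "critical (k + 1) (insert None (Some ` (V - X)))
     ((\<lambda>e. Some ` e) ` induced_edges E (V - X) \<union> (\<lambda>e. insert None (Some ` (e - X))) ` F)"
    by (rule partD[OF gd])
qed

end

lemma comp_exists:
  assumes h: "hypergraph V E" and s: "separating_edge_set V E F"
  shows "\<exists>X. X \<noteq> {} \<and> X \<subset> V \<and> boundary V E X \<subseteq> F"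
proof (rule ccontr)
  assume no: "\<not> ?thesis"
  have finV: "finite V" using h unfolding hypergraph_def by blast
  have EV: "e \<in> E \<Longrightarrow> e \<subseteq> V" for e using h unfolding hypergraph_def by blast
  define R where "R = (adj V (E - F))\<^sup>* \<inter> V \<times> V"
  have cls: "C = V" if C: "C \<in> V // R" for C
  proof -
    obtain v where v: "v \<in> V" "C = R `` {v}" using C by (rule quotientE) blast
    have CV: "C \<subseteq> V" using v unfolding R_def by blast
    have vC: "v \<in> C" using v unfolding R_def by blast
    have "boundary V E C \<subseteq> F"
    proof
      fix e assume e: "e \<in> boundary V E C"
      show "e \<in> F"
      proof (rule ccontr)
        assume nF: "e \<notin> F"
        obtain u where u: "u \<in> e" "u \<in> C" using e unfolding boundary_def by blast
        obtain w where w: "w \<in> e" "w \<in> V" "w \<notin> C" using e unfolding boundary_def by blast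
        have eE: "e \<in> E" using e unfolding boundary_def by blast
        have "(v, u) \<in> (adj V (E - F))\<^sup>*" using u(2) v(2) unfolding R_def by blast
        moreover have "(u, w) \<in> adj V (E - F)" unfolding adj_def using u w CV eE nF by blast
        ultimately have "(v, w) \<in> (adj V (E - F))\<^sup>*" by (rule rtrancl_into_rtrancl)
        then have "w \<in> C" using v w(2) unfolding R_def by blast
        then show False using w(3) by blast
      qed
    qed
    then show "C = V" using no CV vC by blast
  qed
  have c1: "card (components V (E - F)) \<le> 1"
  proof -
    have "components V (E - F) \<subseteq> {V}" using cls unfolding components_def R_def by blast
    then have "card (components V (E - F)) \<le> card {V}" by (rule card_mono[rotated]) simp
    then show ?thesis by simp
  qed
  have gt: "card (components V (E - F)) > card (components V E)" using s unfolding separating_edge_set_def by blast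
  show False
  proof (cases "V = {}")
    case True
    then have "components V (E - F) = {}" unfolding components_def by simp
    then show False using gt by simp
  next
    case False
    then obtain v where v: "v \<in> V" by blast
    define R' where "R' = (adj V E)\<^sup>* \<inter> V \<times> V"
    have "R' `` {v} \<in> V // R'" using v by (rule quotientI)
    moreover have "finite (V // R')" using finV unfolding R'_def by (intro finite_quotient) auto
    ultimately have "card (V // R') \<ge> 1" by (metis card_0_eq empty_iff less_one not_le)
    then show False using gt c1 unfolding components_def R'_def by simp
  qed
qed

theorem theorem12:
  fixes V :: "'a set" and E F :: "'a set set" and k :: nat
  assumes "critical (k + 1) V E"
    and "k \<ge> 2"
    and "separating_edge_set V E F"
    and "card F \<le> k"
  shows "card F = k \<and>
    (\<exists>X. X \<noteq> {} \<and> X \<subset> V \<and> F = boundary V E X \<and>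
       (let Y = V - X; XF = X \<inter> \<Union>F; YF = Y \<inter> \<Union>F in
         (\<forall>\<phi>. is_coloring k X (induced_edges E X) \<phi> \<longrightarrow> card (\<phi> ` XF) = 1) \<and>
         (\<forall>\<phi>. is_coloring k Y (induced_edges E Y) \<phi> \<longrightarrow>
              card (\<phi> ` YF) = k \<and> (\<forall>i\<in>{1..k}. \<exists>e\<in>F. \<phi> ` (e \<inter> Y) = {i})) \<and>
         (\<forall>y\<in>YF. card {e\<in>F. y \<in> e} = 1) \<and>
         (card XF \<ge> 2 \<longrightarrow> critical (k + 1) X (insert XF (induced_edges E X))) \<and>
         critical (k + 1) (insert None (Some ` Y))
           ((\<lambda>e. Some ` e) ` induced_edges E Y \<union>
            (\<lambda>e. insert None (Some ` (e - X))) ` F)))"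

proof -
  have hyp: "hypergraph V E" using assms(1) unfolding critical_def by blast
  have finE: "finite E" using hyp unfolding hypergraph_def by (meson finite_Pow_iff rev_finite_subset)
  have FE: "F \<subseteq> E" using assms(3) unfolding separating_edge_set_def by blast
  have finF: "finite F" using FE finE finite_subset by blast
  obtain X0 where X0: "X0 \<noteq> {}" "X0 \<subset> V" "boundary V E X0 \<subseteq> F"
    using comp_exists[OF hyp assms(3)] by blast
  have cbF: "card (boundary V E X0) \<le> card F" using X0(3) finF by (rule card_mono[rotated])
  then have cb: "card (boundary V E X0) \<le> k" using assms(4) by simp
  interpret c0: cut V E "boundary V E X0" k X0
    using assms(1,2) X0 cb by unfold_locales auto
  have "card (boundary V E X0) = k" by (rule c0.cardFk)
  then have FX0: "boundary V E X0 = F" using card_subset_eq[OF finF X0(3)] assms(4) cbF by simp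
  interpret c: cut V E F k X0
    using assms(1,2,4) X0 FX0 by unfold_locales auto
  have cF: "card F = k" by (rule c.cardFk)
  from c.startcase show ?thesis
  proof
    assume "\<exists>\<phi>. is_coloring k X0 (induced_edges E X0) \<phi> \<and> (\<forall>e1\<in>F. \<forall>e2\<in>F. val \<phi> X0 e1 = val \<phi> X0 e2)"
    then obtain \<phi> where "is_coloring k X0 (induced_edges E X0) \<phi>" "\<forall>e1\<in>F. \<forall>e2\<in>F. val \<phi> X0 e1 = val \<phi> X0 e2" by blast
    then have g: "c.good" by (rule c.orient)
    show ?thesis by (rule conjI[OF cF], rule exI[of _ X0], rule c.main[OF g])
  next
    assume "\<exists>\<psi>. is_coloring k (V - X0) (induced_edges E (V - X0)) \<psi> \<and> (\<forall>e1\<in>F. \<forall>e2\<in>F. val \<psi> (V - X0) e1 = val \<psi> (V - X0) e2)"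
    then obtain \<psi> where p: "is_coloring k (V - X0) (induced_edges E (V - X0)) \<psi>" "\<forall>e1\<in>F. \<forall>e2\<in>F. val \<psi> (V - X0) e1 = val \<psi> (V - X0) e2" by blast
    have bc: "F = boundary V E (V - X0)" using FX0 boundary_compl[of X0 V E] X0(2) by auto
    interpret c': cut V E F k "V - X0"
      using assms(1,2,4) X0 bc by unfold_locales auto
    have g: "c'.good" using p by (rule c'.orient)
    show ?thesis by (rule conjI[OF cF], rule exI[of _ "V - X0"], rule c'.main[OF g])
  qed
qed

end
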